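(* Let $N\ge2$, $\gamma\in(\tfrac12,\tfrac32)$, and let $\Gamma$ satisfy (A1) and (A2) with constant $C_1>0$. Let $\delta\ge0$ and $\alpha\ge 2\gamma$, and take the communication weight $\psi_\delta(s)=(s-\delta)^{-\alpha}$ for $s>\delta$. Suppose the initial data satisfy $|x_{i0}-x_{j0}|>\delta$ for all $1\le i\ne j\le N$. Then for any global smooth solution $(x(t),v(t))$ of the NL CS system with weight $\psi_\delta$ we have $T_0=\infty$. Moreover, for all $t\in[0,T_0)$: (i) if $\alpha=2\gamma$, $$\mathcal{L}^0(t)+\frac{1}{2C_1\gamma(N-1)}\sum_i|v_i(t)|^2\le\frac{2\gamma-1}{2\gamma}\,t+\mathcal{L}^0(0)+\frac{1}{2C_1\gamma(N-1)}\sum_i|v_{i0}|^2;$$ (ii) if $\alpha>2\gamma$, then with $\beta=\frac{\alpha}{2\gamma}-1$, $$\mathcal{L}^\beta(t)+\frac{\beta}{2C_1\gamma(N-1)}\sum_i|v_i(t)|^2\le\frac{(2\gamma-1)\beta}{2\gamma}\,t+\mathcal{L}^\beta(0)+\frac{\beta}{2C_1\gamma(N-1)}\sum_i|v_{i0}|^2.$$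
   Context: The NL CS system: $\frac{d}{dt}x_i=v_i$, $\frac{d}{dt}v_i=\frac1N\sum_{j=1}^N\psi(|x_i-x_j|)\Gamma(v_j-v_i)$, $i=1,\dots,N$, with $x_i,v_i\in\mathbb{R}^d$, initial data $(x_{i0},v_{i0})$, here with $\psi=\psi_\delta$. (A1): $\Gamma(-v)=-\Gamma(v)$ for all $v\in\mathbb{R}^d$. (A2): $\langle\Gamma(v),v\rangle\ge C_1|v|^{2\gamma}$ for all $v\in\mathbb{R}^d$. Sums $\sum_i$ run over $1\le i\le N$, and $\sum_{i\ne j}$ over all ordered pairs with $i\ne j$. For a configuration with $|x_i-x_j|>\delta$ for all $i\ne j$, define for $\beta>0$ $$\mathcal{L}^\beta(t)=\frac{1}{N(N-1)}\sum_{i\ne j}\big(|x_i(t)-x_j(t)|-\delta\big)^{-\beta},\qquad \mathcal{L}^0(t)=\frac{1}{N(N-1)}\sum_{i\ne j}\log\big(|x_i(t)-x_j(t)|-\delta\big).$$ A collision at time $t$ means $|x_i(t)-x_j(t)|\le\delta$ for some $i\ne j$. The maximal collisionless life-span is $T_0:=\sup\{s\ge0:\ \text{no solution of the system with the given data has a collision on }[0,s)\}$. *)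

theory Defs
  imports "HOL-Analysis.Analysis"
begin

definition psi_delta :: "real \<Rightarrow> real \<Rightarrow> real \<Rightarrow> real" where
  "psi_delta \<delta> \<alpha> s = (s - \<delta>) powr (- \<alpha>)"

definition collisionless :: "nat \<Rightarrow> real \<Rightarrow> (nat \<Rightarrow> real \<Rightarrow> 'a::real_normed_vector) \<Rightarrow> real \<Rightarrow> bool" where
  "collisionless N \<delta> x t \<longleftrightarrow> (\<forall>i\<in>{1..N}. \<forall>j\<in>{1..N}. i \<noteq> j \<longrightarrow> norm (x i t - x j t) > \<delta>)"

definition life_span :: "nat \<Rightarrow> real \<Rightarrow> (nat \<Rightarrow> real \<Rightarrow> 'a::real_normed_vector) \<Rightarrow> ereal" where
  "life_span N \<delta> x = Sup {ereal s | s. s \<ge> 0 \<and> (\<forall>\<tau>. 0 \<le> \<tau> \<and> \<tau> < s \<longrightarrow> collisionless N \<delta> x \<tau>)}"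

definition Lbeta :: "nat \<Rightarrow> real \<Rightarrow> real \<Rightarrow> (nat \<Rightarrow> real \<Rightarrow> 'a::real_normed_vector) \<Rightarrow> real \<Rightarrow> real" where
  "Lbeta N \<delta> \<beta> x t = (1 / (real N * (real N - 1))) *
     (\<Sum>i\<in>{1..N}. \<Sum>j\<in>{1..N}-{i}. (norm (x i t - x j t) - \<delta>) powr (- \<beta>))"

definition L0 :: "nat \<Rightarrow> real \<Rightarrow> (nat \<Rightarrow> real \<Rightarrow> 'a::real_normed_vector) \<Rightarrow> real \<Rightarrow> real" where
  "L0 N \<delta> x t = (1 / (real N * (real N - 1))) *
     (\<Sum>i\<in>{1..N}. \<Sum>j\<in>{1..N}-{i}. ln (norm (x i t - x j t) - \<delta>))"

end

theory Submission
  imports Defs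
begin
lemma r_deriv:
  fixes y :: "real \<Rightarrow> 'a::euclidean_space"
  assumes "(y has_vector_derivative w) (at s within S)" "y s \<noteq> 0"
  shows "((\<lambda>t. norm (y t)) has_real_derivative (inner (y s) w / norm (y s))) (at s within S)"
proof -
  have 1: "(norm has_derivative (\<lambda>h. h \<bullet> sgn (y s))) (at (y s))"
    using has_derivative_norm[OF assms(2)] by simp
  have 2: "(y has_derivative (\<lambda>h. h *\<^sub>R w)) (at s within S)"
    using assms(1) by (simp add: has_vector_derivative_def)
  have "((\<lambda>t. norm (y t)) has_derivative (\<lambda>h. (h *\<^sub>R w) \<bullet> sgn (y s))) (at s within S)"
    using has_derivative_compose[OF 2 1] by (simp add: o_def)
  then show ?thesis
    unfolding has_field_derivative_def
    by (rule has_derivative_eq_rhs) (auto simp: fun_eq_iff sgn_div_norm inner_commute field_simps)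
qed

lemma e_deriv:
  fixes y :: "real \<Rightarrow> 'a::euclidean_space"
  assumes "(y has_vector_derivative w) (at s within S)"
  shows "((\<lambda>t. (norm (y t))\<^sup>2) has_real_derivative (2 * inner (y s) w)) (at s within S)"
proof -
  have 2: "(y has_derivative (\<lambda>h. h *\<^sub>R w)) (at s within S)"
    using assms(1) by (simp add: has_vector_derivative_def)
  have "((\<lambda>t. inner (y t) (y t)) has_derivative (\<lambda>h. inner (y s) (h *\<^sub>R w) + inner (h *\<^sub>R w) (y s))) (at s within S)"
    by (rule has_derivative_inner[OF 2 2])
  thus ?thesis unfolding has_field_derivative_def power2_norm_eq_inner
    by (rule has_derivative_eq_rhs) (auto simp: fun_eq_iff inner_commute algebra_simps)
qed

lemma young1:
  fixes a g :: real
  assumes "a \<ge> 0" "g > 1"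
  shows "a \<le> a powr g / g + (g - 1) / g"
proof -
  have "a * 1 \<le> a powr g / g + 1 powr (g/(g-1)) / (g/(g-1))"
    by (rule Youngs_inequality) (use assms in \<open>auto simp: field_simps\<close>)
  thus ?thesis by simp
qed

locale csl =
  fixes N :: nat and \<gamma> C\<^sub>1 \<delta> \<alpha> :: real
    and \<Gamma> :: "'a::euclidean_space \<Rightarrow> 'a"
    and x v :: "nat \<Rightarrow> real \<Rightarrow> 'a"
  assumes N: "N \<ge> 2"
    and gamma: "1/2 < \<gamma>" "\<gamma> < 3/2"
    and C1: "C\<^sub>1 > 0"
    and A1: "\<And>w. \<Gamma> (- w) = - \<Gamma> w"
    and A2: "\<And>w. inner (\<Gamma> w) w \<ge> C\<^sub>1 * norm w powr (2 * \<gamma>)"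
    and delta: "\<delta> \<ge> 0"
    and dx: "\<And>i t. i \<in> {1..N} \<Longrightarrow> t \<ge> 0 \<Longrightarrow>
               (x i has_vector_derivative v i t) (at t within {0..})"
    and dv: "\<And>i t. i \<in> {1..N} \<Longrightarrow> t \<ge> 0 \<Longrightarrow> collisionless N \<delta> x t \<Longrightarrow>
               (v i has_vector_derivative
                  ((1 / real N) *\<^sub>R (\<Sum>j\<in>{1..N}.
                      psi_delta \<delta> \<alpha> (norm (x i t - x j t)) *\<^sub>R \<Gamma> (v j t - v i t))))
               (at t within {0..})"
begin

definition Phi :: "(real \<Rightarrow> real) \<Rightarrow> real \<Rightarrow> real" where
  "Phi f t = (1 / (real N * (real N - 1))) *
     (\<Sum>i\<in>{1..N}. \<Sum>j\<in>{1..N}-{i}. f (norm (x i t - x j t)))"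

definition En :: "real \<Rightarrow> real" where
  "En t = (\<Sum>i\<in>{1..N}. (norm (v i t))\<^sup>2)"

lemma En_nonneg: "En t \<ge> 0"
  unfolding En_def by (simp add: sum_nonneg)

lemma card_pairs: "(\<Sum>i\<in>{1..N}. \<Sum>j\<in>{1..N}-{i}. (c::real)) = real N * (real N - 1) * c"
proof -
  have "(\<Sum>i\<in>{1..N}. \<Sum>j\<in>{1..N}-{i}. c) = (\<Sum>i\<in>{1..N}. (real N - 1) * c)"
    by (rule sum.cong) (auto simp: card_Diff_singleton of_nat_diff)
  thus ?thesis by simp
qed

lemma x_cont: "i \<in> {1..N} \<Longrightarrow> continuous_on {0..} (x i)"
  unfolding continuous_on_eq_continuous_within
  using dx has_vector_derivative_continuous by fastforce

lemma energy_sym: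
  fixes s :: real
  shows "(\<Sum>i\<in>{1..N}. \<Sum>j\<in>{1..N}. psi_delta \<delta> \<alpha> (norm (x i s - x j s)) * inner (v i s) (\<Gamma> (v j s - v i s)))
      \<le> - (C\<^sub>1 / 2) * (\<Sum>i\<in>{1..N}. \<Sum>j\<in>{1..N}-{i}. psi_delta \<delta> \<alpha> (norm (x i s - x j s)) * norm (v i s - v j s) powr (2 * \<gamma>))"
proof -
  define P where "P i j = psi_delta \<delta> \<alpha> (norm (x i s - x j s)) * inner (v i s) (\<Gamma> (v j s - v i s))" for i j
  define Q where "Q i j = psi_delta \<delta> \<alpha> (norm (x i s - x j s)) * norm (v i s - v j s) powr (2 * \<gamma>)" for i j
  have sw: "(\<Sum>i\<in>{1..N}. \<Sum>j\<in>{1..N}. P i j) = (\<Sum>i\<in>{1..N}. \<Sum>j\<in>{1..N}. P j i)"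
    by (rule sum.swap)
  have pt: "P i j + P j i \<le> - C\<^sub>1 * Q i j" for i j
  proof -
    define w where "w = v j s - v i s"
    have ps: "psi_delta \<delta> \<alpha> (norm (x j s - x i s)) = psi_delta \<delta> \<alpha> (norm (x i s - x j s))"
      by (simp add: norm_minus_commute)
    have "v i s - v j s = - w" by (simp add: w_def)
    have "P i j + P j i = psi_delta \<delta> \<alpha> (norm (x i s - x j s)) * (inner (v i s) (\<Gamma> w) - inner (v j s) (\<Gamma> w))"
      unfolding P_def ps using A1[of w] by (simp add: w_def algebra_simps)
    also have "\<dots> = - psi_delta \<delta> \<alpha> (norm (x i s - x j s)) * inner (\<Gamma> w) w"
      by (simp add: w_def inner_diff_right inner_commute algebra_simps)
    also have "\<dots> \<le> - psi_delta \<delta> \<alpha> (norm (x i s - x j s)) * (C\<^sub>1 * norm w powr (2 * \<gamma>))"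
      using A2[of w] by (simp add: psi_delta_def mult_left_mono)
    also have "\<dots> = - C\<^sub>1 * Q i j"
      by (simp add: Q_def w_def norm_minus_commute)
    finally show ?thesis .
  qed
  have "2 * (\<Sum>i\<in>{1..N}. \<Sum>j\<in>{1..N}. P i j) = (\<Sum>i\<in>{1..N}. \<Sum>j\<in>{1..N}. P i j + P j i)"
    using sw by (simp add: sum.distrib)
  also have "\<dots> \<le> (\<Sum>i\<in>{1..N}. \<Sum>j\<in>{1..N}. - C\<^sub>1 * Q i j)"
    by (intro sum_mono pt)
  also have "\<dots> = - C\<^sub>1 * (\<Sum>i\<in>{1..N}. \<Sum>j\<in>{1..N}. Q i j)"
    by (simp add: sum_distrib_left)
  also have "(\<Sum>i\<in>{1..N}. \<Sum>j\<in>{1..N}. Q i j) = (\<Sum>i\<in>{1..N}. \<Sum>j\<in>{1..N}-{i}. Q i j)"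
  proof (rule sum.cong[OF refl])
    fix i assume "i \<in> {1..N}"
    hence "(\<Sum>j\<in>{1..N}. Q i j) = Q i i + (\<Sum>j\<in>{1..N}-{i}. Q i j)"
      by (simp add: sum.remove)
    moreover have "Q i i = 0" using gamma by (simp add: Q_def)
    ultimately show "(\<Sum>j\<in>{1..N}. Q i j) = (\<Sum>j\<in>{1..N}-{i}. Q i j)" by simp
  qed
  finally show ?thesis unfolding P_def Q_def by simp
qed

lemma lyap:
  fixes f f' :: "real \<Rightarrow> real" and \<kappa> t :: real
  assumes fd: "\<And>s. s > \<delta> \<Longrightarrow> (f has_real_derivative f' s) (at s)"
    and fb: "\<And>s. s > \<delta> \<Longrightarrow> \<bar>f' s\<bar> \<le> \<kappa> * (s - \<delta>) powr (-(\<alpha>/(2*\<gamma>)))"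
    and \<kappa>: "\<kappa> \<ge> 0" and t: "t \<ge> 0"
    and col: "\<And>\<tau>. 0 \<le> \<tau> \<Longrightarrow> \<tau> \<le> t \<Longrightarrow> collisionless N \<delta> x \<tau>"
  shows "Phi f t + \<kappa> / (2 * C\<^sub>1 * \<gamma> * (real N - 1)) * En t
     \<le> \<kappa> * (2 * \<gamma> - 1) / (2 * \<gamma>) * t + Phi f 0 + \<kappa> / (2 * C\<^sub>1 * \<gamma> * (real N - 1)) * En 0"
proof -
  define M where "M = real N * (real N - 1)"
  define K where "K = \<kappa> / (2 * C\<^sub>1 * \<gamma> * (real N - 1))"
  define c where "c = \<kappa> * (2 * \<gamma> - 1) / (2 * \<gamma>)"
  define G where "G t = Phi f t + K * En t - c * t" for t
  define ps where "ps s i j = psi_delta \<delta> \<alpha> (norm (x i s - x j s))" for s i j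
  define acc where "acc s i = (1 / real N) *\<^sub>R (\<Sum>j\<in>{1..N}. ps s i j *\<^sub>R \<Gamma> (v j s - v i s))" for s i
  define G' where "G' s = (1 / M) * (\<Sum>i\<in>{1..N}. \<Sum>j\<in>{1..N}-{i}.
      f' (norm (x i s - x j s)) * (inner (x i s - x j s) (v i s - v j s) / norm (x i s - x j s)))
      + K * (\<Sum>i\<in>{1..N}. 2 * inner (v i s) (acc s i)) - c" for s
  have Mpos: "M > 0" using N by (simp add: M_def)
  have gpos: "\<gamma> > 0" using gamma by simp
  have Nge: "real N - 1 > 0" using N by simp
  have coli: "norm (x i s - x j s) > \<delta>" if "0 \<le> s" "s \<le> t" "i \<in> {1..N}" "j \<in> {1..N}" "i \<noteq> j" for s i j
    using col[OF that(1,2)] that unfolding collisionless_def by blast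
  have derG: "(G has_real_derivative G' s) (at s within {0..})" if s: "0 \<le> s" "s \<le> t" for s
  proof -
    have dPhi: "((\<lambda>t. \<Sum>i\<in>{1..N}. \<Sum>j\<in>{1..N}-{i}. f (norm (x i t - x j t))) has_real_derivative
       (\<Sum>i\<in>{1..N}. \<Sum>j\<in>{1..N}-{i}.
      f' (norm (x i s - x j s)) * (inner (x i s - x j s) (v i s - v j s) / norm (x i s - x j s)))) (at s within {0..})"
    proof (intro DERIV_sum)
      fix i j assume i: "i \<in> {1..N}" and j: "j \<in> {1..N} - {i}"
      have r: "norm (x i s - x j s) > \<delta>" using coli[OF s] i j by auto
      have ne: "x i s - x j s \<noteq> 0" using r delta by auto
      have dd: "((\<lambda>t. x i t - x j t) has_vector_derivative (v i s - v j s)) (at s within {0..})"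
        using dx[OF i s(1)] dx[of j s] j s by (auto intro: has_vector_derivative_diff)
      show "((\<lambda>t. f (norm (x i t - x j t))) has_real_derivative
          f' (norm (x i s - x j s)) * (inner (x i s - x j s) (v i s - v j s) / norm (x i s - x j s))) (at s within {0..})"
        using DERIV_chain2[OF fd[OF r] r_deriv[OF dd ne]] .
    qed
    have dE: "(En has_real_derivative (\<Sum>i\<in>{1..N}. 2 * inner (v i s) (acc s i))) (at s within {0..})"
      unfolding En_def
    proof (intro DERIV_sum)
      fix i assume i: "i \<in> {1..N}"
      have "(v i has_vector_derivative acc s i) (at s within {0..})"
        unfolding acc_def ps_def using dv[OF i s(1) col[OF s]] .
      thus "((\<lambda>t. (norm (v i t))\<^sup>2) has_real_derivative 2 * inner (v i s) (acc s i)) (at s within {0..})"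
        by (rule e_deriv)
    qed
    have "(G has_real_derivative (1 / M) * (\<Sum>i\<in>{1..N}. \<Sum>j\<in>{1..N}-{i}.
      f' (norm (x i s - x j s)) * (inner (x i s - x j s) (v i s - v j s) / norm (x i s - x j s)))
      + K * (\<Sum>i\<in>{1..N}. 2 * inner (v i s) (acc s i)) - c * 1) (at s within {0..})"
      unfolding G_def[abs_def] Phi_def M_def[symmetric]
      by (intro DERIV_diff DERIV_add DERIV_cmult dPhi dE DERIV_ident)
    thus ?thesis by (simp add: G'_def)
  qed
  have G'neg: "G' s \<le> 0" if s: "0 \<le> s" "s \<le> t" for s
  proof -
    define Q where "Q i j = ps s i j * norm (v i s - v j s) powr (2 * \<gamma>)" for i j
    have tm: "f' (norm (x i s - x j s)) * (inner (x i s - x j s) (v i s - v j s) / norm (x i s - x j s))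
        \<le> \<kappa> * (Q i j / (2 * \<gamma>) + (2 * \<gamma> - 1) / (2 * \<gamma>))"
      if i: "i \<in> {1..N}" and j: "j \<in> {1..N} - {i}" for i j
    proof -
      define r where "r = norm (x i s - x j s)"
      define u where "u = r - \<delta>"
      define wn where "wn = norm (v i s - v j s)"
      have r: "r > \<delta>" using coli[OF s] i j by (auto simp: r_def)
      have rpos: "r > 0" using r delta by simp
      have upos: "u > 0" using r by (simp add: u_def)
      have "f' r * (inner (x i s - x j s) (v i s - v j s) / r) \<le> \<bar>f' r\<bar> * (\<bar>inner (x i s - x j s) (v i s - v j s)\<bar> / r)"
        by (metis abs_divide abs_ge_self abs_mult abs_of_pos rpos)
      also have "\<dots> \<le> \<bar>f' r\<bar> * wn"
      proof -
        have "\<bar>inner (x i s - x j s) (v i s - v j s)\<bar> \<le> r * wn"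
          unfolding r_def wn_def by (rule Cauchy_Schwarz_ineq2)
        hence "\<bar>inner (x i s - x j s) (v i s - v j s)\<bar> / r \<le> wn"
          using rpos by (simp add: divide_le_eq mult.commute)
        thus ?thesis using mult_left_mono[of _ wn "\<bar>f' r\<bar>"] by (simp add: times_divide_eq_right[symmetric] del: times_divide_eq_right)
      qed
      also have "\<dots> \<le> \<kappa> * (u powr (-(\<alpha>/(2*\<gamma>))) * wn)"
        using mult_right_mono[OF fb[OF r] norm_ge_zero[of "v i s - v j s"]] by (simp add: u_def wn_def mult.assoc)
      also have "\<dots> \<le> \<kappa> * ((u powr (-(\<alpha>/(2*\<gamma>))) * wn) powr (2*\<gamma>) / (2*\<gamma>) + (2 * \<gamma> - 1) / (2 * \<gamma>))"
        using young1[of "u powr (-(\<alpha>/(2*\<gamma>))) * wn" "2*\<gamma>"] gamma \<kappa>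
        by (intro mult_left_mono) (auto simp: wn_def)
      also have "(u powr (-(\<alpha>/(2*\<gamma>))) * wn) powr (2*\<gamma>) = Q i j"
      proof -
        have "(u powr (-(\<alpha>/(2*\<gamma>))) * wn) powr (2*\<gamma>) = (u powr (-(\<alpha>/(2*\<gamma>)))) powr (2*\<gamma>) * wn powr (2*\<gamma>)"
          by (simp add: powr_mult wn_def)
        also have "(u powr (-(\<alpha>/(2*\<gamma>)))) powr (2*\<gamma>) = u powr (-\<alpha>)"
          using gpos by (simp add: powr_powr)
        finally show ?thesis
          by (simp add: Q_def ps_def psi_delta_def u_def r_def wn_def)
      qed
      finally show ?thesis by (simp add: r_def)
    qed
    have en: "(\<Sum>i\<in>{1..N}. 2 * inner (v i s) (acc s i))
        = (2 / real N) * (\<Sum>i\<in>{1..N}. \<Sum>j\<in>{1..N}. ps s i j * inner (v i s) (\<Gamma> (v j s - v i s)))"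
      by (simp add: acc_def inner_sum_right sum_distrib_left)
    have en2: "(\<Sum>i\<in>{1..N}. 2 * inner (v i s) (acc s i)) \<le> (2 / real N) * (- (C\<^sub>1 / 2) * (\<Sum>i\<in>{1..N}. \<Sum>j\<in>{1..N}-{i}. Q i j))"
      unfolding en Q_def ps_def using N by (intro mult_left_mono energy_sym) auto
    define SQ where "SQ = (\<Sum>i\<in>{1..N}. \<Sum>j\<in>{1..N}-{i}. Q i j)"
    have "(\<Sum>i\<in>{1..N}. \<Sum>j\<in>{1..N}-{i}.
      f' (norm (x i s - x j s)) * (inner (x i s - x j s) (v i s - v j s) / norm (x i s - x j s)))
      \<le> (\<Sum>i\<in>{1..N}. \<Sum>j\<in>{1..N}-{i}. \<kappa> * (Q i j / (2 * \<gamma>) + (2 * \<gamma> - 1) / (2 * \<gamma>)))"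
      by (intro sum_mono tm) auto
    also have "\<dots> = \<kappa> / (2 * \<gamma>) * SQ + M * c"
      using card_pairs[of "\<kappa> * (2 * \<gamma> - 1) / (2 * \<gamma>)"]
      by (simp add: SQ_def algebra_simps sum.distrib sum_distrib_left sum_divide_distrib M_def c_def)
    finally have sumt': "(\<Sum>i\<in>{1..N}. \<Sum>j\<in>{1..N}-{i}.
      f' (norm (x i s - x j s)) * (inner (x i s - x j s) (v i s - v j s) / norm (x i s - x j s)))
      \<le> \<kappa> / (2 * \<gamma>) * SQ + M * c" .
    have Kge: "K \<ge> 0" using \<kappa> C1 gpos Nge by (simp add: K_def)
    have "G' s \<le> (1 / M) * (\<kappa> / (2 * \<gamma>) * SQ + M * c) + K * ((2 / real N) * (- (C\<^sub>1 / 2) * SQ)) - c"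
      unfolding G'_def using sumt' en2[folded SQ_def] Mpos Kge
      by (intro diff_right_mono add_mono mult_left_mono) auto
    also have "\<dots> = 0"
    proof -
      have e1: "(1 / M) * (\<kappa> / (2 * \<gamma>) * SQ + M * c) = \<kappa> / (2 * \<gamma> * M) * SQ + c"
        using Mpos gpos by (simp add: field_simps)
      have e2: "K * ((2 / real N) * (- (C\<^sub>1 / 2) * SQ)) = - (\<kappa> / (2 * \<gamma> * M) * SQ)"
        using Mpos gpos C1 Nge N unfolding K_def M_def by (simp add: field_simps)
      show ?thesis unfolding e1 e2 by simp
    qed
    finally show ?thesis .
  qed
  have cont: "continuous_on {0..t} G"
    unfolding continuous_on_eq_continuous_within
  proof
    fix s assume "s \<in> {0..t}"
    hence "continuous (at s within {0..}) G"
      using derG by (auto intro: DERIV_continuous)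
    thus "continuous (at s within {0..t}) G"
      by (rule continuous_within_subset) auto
  qed
  have "G t \<le> G 0"
  proof (rule DERIV_nonpos_imp_decreasing_open[OF t _ cont])
    fix s assume s: "0 < s" "s < t"
    have "(G has_real_derivative G' s) (at s within {0<..})"
      by (rule DERIV_subset[OF derG]) (use s in auto)
    hence "(G has_real_derivative G' s) (at s)"
      using at_within_open[of s "{0<..}"] s by simp
    thus "\<exists>y. (G has_real_derivative y) (at s) \<and> y \<le> 0"
      using G'neg s by auto
  qed
  thus ?thesis by (simp add: G_def K_def c_def)
qed

lemma nocoll:
  fixes f f' :: "real \<Rightarrow> real" and \<kappa> :: real
  assumes fd: "\<And>s. s > \<delta> \<Longrightarrow> (f has_real_derivative f' s) (at s)"
    and fb: "\<And>s. s > \<delta> \<Longrightarrow> \<bar>f' s\<bar> \<le> \<kappa> * (s - \<delta>) powr (-(\<alpha>/(2*\<gamma>)))"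
    and \<kappa>: "\<kappa> \<ge> 0"
    and fnn: "\<And>s. s > \<delta> \<Longrightarrow> f s \<ge> 0"
    and blow: "\<And>B. \<exists>\<eta>>0. \<forall>s. \<delta> < s \<and> s < \<delta> + \<eta> \<longrightarrow> B < f s"
    and init: "collisionless N \<delta> x 0"
    and t: "t \<ge> 0"
  shows "collisionless N \<delta> x t"
proof (rule ccontr)
  assume nc: "\<not> collisionless N \<delta> x t"
  define P where "P = {(i, j). i \<in> {1..N} \<and> j \<in> {1..N} \<and> i \<noteq> j}"
  define S where "S = {s \<in> {0..}. \<not> collisionless N \<delta> x s}"
  have finP: "finite P" unfolding P_def
    by (rule finite_subset[of _ "{1..N} \<times> {1..N}"]) auto
  have Seq: "S = (\<Union>p\<in>P. {s \<in> {0..}. norm (x (fst p) s - x (snd p) s) \<le> \<delta>})"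
  proof (rule set_eqI)
    fix s
    show "s \<in> S \<longleftrightarrow> s \<in> (\<Union>p\<in>P. {s \<in> {0..}. norm (x (fst p) s - x (snd p) s) \<le> \<delta>})"
    proof
      assume "s \<in> S"
      then obtain a b where "s \<ge> 0" "a \<in> {1..N}" "b \<in> {1..N}" "a \<noteq> b" "norm (x a s - x b s) \<le> \<delta>"
        unfolding S_def collisionless_def by (auto simp: not_less)
      thus "s \<in> (\<Union>p\<in>P. {s \<in> {0..}. norm (x (fst p) s - x (snd p) s) \<le> \<delta>})"
        unfolding P_def by (intro UN_I[of "(a, b)"]) auto
    next
      assume "s \<in> (\<Union>p\<in>P. {s \<in> {0..}. norm (x (fst p) s - x (snd p) s) \<le> \<delta>})"
      then obtain a b where "(a, b) \<in> P" "s \<ge> 0" "norm (x a s - x b s) \<le> \<delta>" by auto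
      hence "a \<in> {1..N}" "b \<in> {1..N}" "a \<noteq> b" "s \<ge> 0" "norm (x a s - x b s) \<le> \<delta>"
        unfolding P_def by auto
      hence "\<not> collisionless N \<delta> x s" unfolding collisionless_def
        by (metis not_less)
      thus "s \<in> S" unfolding S_def using \<open>s \<ge> 0\<close> by simp
    qed
  qed
  have closedS: "closed S"
    unfolding Seq
  proof (intro closed_UN finP ballI)
    fix p assume "p \<in> P"
    hence "fst p \<in> {1..N}" "snd p \<in> {1..N}" unfolding P_def by auto
    hence "continuous_on {0..} (\<lambda>s. norm (x (fst p) s - x (snd p) s))"
      using x_cont by (intro continuous_intros) auto
    thus "closed {s \<in> {0..}. norm (x (fst p) s - x (snd p) s) \<le> \<delta>}"
      by (intro continuous_on_closed_Collect_le) (auto intro: continuous_intros)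
  qed
  have Sne: "S \<noteq> {}" using nc t by (auto simp: S_def)
  have bdd: "bdd_below S" unfolding S_def by (rule bdd_belowI[of _ 0]) auto
  define T where "T = Inf S"
  have TS: "T \<in> S" unfolding T_def by (rule closed_contains_Inf[OF Sne bdd closedS])
  have T0: "T \<ge> 0" using TS by (auto simp: S_def)
  have Tne: "T \<noteq> 0" using TS init by (auto simp: S_def)
  have before: "collisionless N \<delta> x \<tau>" if "0 \<le> \<tau>" "\<tau> < T" for \<tau>
  proof (rule ccontr)
    assume "\<not> collisionless N \<delta> x \<tau>"
    hence "\<tau> \<in> S" using that by (auto simp: S_def)
    hence "T \<le> \<tau>" unfolding T_def by (rule cInf_lower[OF _ bdd])
    thus False using that by simp
  qed
  obtain i j where ij: "i \<in> {1..N}" "j \<in> {1..N}" "i \<noteq> j" and rT: "norm (x i T - x j T) \<le> \<delta>"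
    using TS by (auto simp: S_def collisionless_def)
  define M where "M = real N * (real N - 1)"
  define K where "K = \<kappa> / (2 * C\<^sub>1 * \<gamma> * (real N - 1))"
  define c where "c = \<kappa> * (2 * \<gamma> - 1) / (2 * \<gamma>)"
  define B where "B = c * T + Phi f 0 + K * En 0"
  have Mpos: "M > 0" using N by (simp add: M_def)
  have Kge: "K \<ge> 0" using \<kappa> C1 gamma N by (simp add: K_def)
  have cge: "c \<ge> 0" using \<kappa> gamma by (simp add: c_def)
  have bound: "f (norm (x i \<tau> - x j \<tau>)) \<le> M * B" if \<tau>: "0 \<le> \<tau>" "\<tau> < T" for \<tau>
  proof -
    have L: "Phi f \<tau> + K * En \<tau> \<le> c * \<tau> + Phi f 0 + K * En 0"
      unfolding K_def c_def
      by (rule lyap[OF fd fb \<kappa> \<tau>(1)]) (use before \<tau> in auto)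
    have "Phi f \<tau> \<le> B"
    proof -
      have "K * En \<tau> \<ge> 0" using Kge En_nonneg[of \<tau>] by simp
      moreover have "c * \<tau> \<le> c * T" using cge \<tau> by (intro mult_left_mono) auto
      ultimately show ?thesis using L unfolding B_def by linarith
    qed
    moreover have "f (norm (x i \<tau> - x j \<tau>)) \<le> (\<Sum>i\<in>{1..N}. \<Sum>j\<in>{1..N}-{i}. f (norm (x i \<tau> - x j \<tau>)))"
    proof -
      have nn: "f (norm (x a \<tau> - x b \<tau>)) \<ge> 0" if "a \<in> {1..N}" "b \<in> {1..N} - {a}" for a b
        using before[OF \<tau>] that unfolding collisionless_def by (intro fnn) auto
      have "f (norm (x i \<tau> - x j \<tau>)) \<le> (\<Sum>j\<in>{1..N}-{i}. f (norm (x i \<tau> - x j \<tau>)))"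
        by (rule member_le_sum) (use ij nn in auto)
      also have "\<dots> \<le> (\<Sum>i\<in>{1..N}. \<Sum>j\<in>{1..N}-{i}. f (norm (x i \<tau> - x j \<tau>)))"
        by (rule member_le_sum[of i]) (use ij in \<open>auto intro!: sum_nonneg nn\<close>)
      finally show ?thesis .
    qed
    ultimately show ?thesis using Mpos unfolding Phi_def M_def[symmetric]
      by (simp add: field_simps)
  qed
  obtain \<eta> where \<eta>: "\<eta> > 0" "\<And>s. \<delta> < s \<Longrightarrow> s < \<delta> + \<eta> \<Longrightarrow> M * B < f s"
    using blow[of "M * B"] by blast
  have "continuous (at T within {0..}) (\<lambda>s. norm (x i s - x j s))"
  proof -
    have "continuous_on {0..} (\<lambda>s. norm (x i s - x j s))"
      using x_cont ij by (intro continuous_intros) auto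
    thus ?thesis using T0 unfolding continuous_on_eq_continuous_within by auto
  qed
  then obtain d where d: "d > 0" "\<And>s. s \<in> {0..} \<Longrightarrow> dist s T < d \<Longrightarrow>
      dist (norm (x i s - x j s)) (norm (x i T - x j T)) < \<eta>"
    using \<eta>(1) unfolding continuous_within_eps_delta by blast
  define \<tau> where "\<tau> = max 0 (T - d/2)"
  have \<tau>: "0 \<le> \<tau>" "\<tau> < T" "dist \<tau> T < d" using d T0 Tne by (auto simp: \<tau>_def dist_real_def)
  have r1: "norm (x i \<tau> - x j \<tau>) > \<delta>"
    using before[OF \<tau>(1,2)] ij unfolding collisionless_def by auto
  have r2: "norm (x i \<tau> - x j \<tau>) < \<delta> + \<eta>"
    using d(2)[of \<tau>] \<tau> rT by (auto simp: dist_real_def)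
  show False using \<eta>(2)[OF r1 r2] bound[OF \<tau>(1,2)] by simp
qed

end

theorem theorem2:
  fixes N :: nat and \<gamma> C\<^sub>1 \<delta> \<alpha> :: real
    and \<Gamma> :: "'a::euclidean_space \<Rightarrow> 'a"
    and x v :: "nat \<Rightarrow> real \<Rightarrow> 'a"
  assumes N: "N \<ge> 2"
    and gamma: "1/2 < \<gamma>" "\<gamma> < 3/2"
    and C1: "C\<^sub>1 > 0"
    and A1: "\<And>w. \<Gamma> (- w) = - \<Gamma> w"
    and A2: "\<And>w. inner (\<Gamma> w) w \<ge> C\<^sub>1 * norm w powr (2 * \<gamma>)"
    and delta: "\<delta> \<ge> 0"
    and alpha: "\<alpha> \<ge> 2 * \<gamma>"
    and init: "collisionless N \<delta> x 0"
    and dx: "\<And>i t. i \<in> {1..N} \<Longrightarrow> t \<ge> 0 \<Longrightarrow>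
               (x i has_vector_derivative v i t) (at t within {0..})"
    and dv: "\<And>i t. i \<in> {1..N} \<Longrightarrow> t \<ge> 0 \<Longrightarrow> collisionless N \<delta> x t \<Longrightarrow>
               (v i has_vector_derivative
                  ((1 / real N) *\<^sub>R (\<Sum>j\<in>{1..N}.
                      psi_delta \<delta> \<alpha> (norm (x i t - x j t)) *\<^sub>R \<Gamma> (v j t - v i t))))
               (at t within {0..})"
  shows "life_span N \<delta> x = \<infinity> \<and>
    (\<forall>t. 0 \<le> t \<and> ereal t < life_span N \<delta> x \<longrightarrow>
      (\<alpha> = 2 * \<gamma> \<longrightarrow>
         L0 N \<delta> x t + 1 / (2 * C\<^sub>1 * \<gamma> * (real N - 1)) * (\<Sum>i\<in>{1..N}. (norm (v i t))\<^sup>2)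
         \<le> (2 * \<gamma> - 1) / (2 * \<gamma>) * t + L0 N \<delta> x 0
           + 1 / (2 * C\<^sub>1 * \<gamma> * (real N - 1)) * (\<Sum>i\<in>{1..N}. (norm (v i 0))\<^sup>2)) \<and>
      (\<alpha> > 2 * \<gamma> \<longrightarrow>
         (let \<beta> = \<alpha> / (2 * \<gamma>) - 1 in
         Lbeta N \<delta> \<beta> x t + \<beta> / (2 * C\<^sub>1 * \<gamma> * (real N - 1)) * (\<Sum>i\<in>{1..N}. (norm (v i t))\<^sup>2)
         \<le> (2 * \<gamma> - 1) * \<beta> / (2 * \<gamma>) * t + Lbeta N \<delta> \<beta> x 0
           + \<beta> / (2 * C\<^sub>1 * \<gamma> * (real N - 1)) * (\<Sum>i\<in>{1..N}. (norm (v i 0))\<^sup>2))))"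
proof -
  interpret L: csl N \<gamma> C\<^sub>1 \<delta> \<alpha> \<Gamma> x v
    using N gamma C1 A1 A2 delta dx dv by unfold_locales auto
  have gpos: "\<gamma> > 0" using gamma by simp
  have allcol: "collisionless N \<delta> x t" if t: "t \<ge> 0" for t
  proof (cases "\<alpha> = 2 * \<gamma>")
    case True
    have p1: "\<alpha> / (2 * \<gamma>) = 1" using True gpos by simp
    show ?thesis
    proof (rule L.nocoll[where f = "\<lambda>s. ln (1 + (s - \<delta>)) - ln (s - \<delta>)"
          and f' = "\<lambda>s. 1 / (1 + (s - \<delta>)) - 1 / (s - \<delta>)" and \<kappa> = 1, OF _ _ _ _ _ init t])
      fix s assume s: "s > \<delta>"
      show "((\<lambda>s. ln (1 + (s - \<delta>)) - ln (s - \<delta>)) has_real_derivative 1 / (1 + (s - \<delta>)) - 1 / (s - \<delta>)) (at s)"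
        using s by (auto intro!: derivative_eq_intros)
      show "\<bar>1 / (1 + (s - \<delta>)) - 1 / (s - \<delta>)\<bar> \<le> 1 * (s - \<delta>) powr - (\<alpha> / (2 * \<gamma>))"
      proof -
        have u: "s - \<delta> > 0" using s by simp
        have h1: "1 / (1 + (s - \<delta>)) \<le> 1 / (s - \<delta>)" using u by (intro divide_left_mono) auto
        have h2: "1 / (1 + (s - \<delta>)) \<ge> 0" using u by simp
        have "\<bar>1 / (1 + (s - \<delta>)) - 1 / (s - \<delta>)\<bar> \<le> 1 / (s - \<delta>)" using h1 h2 by linarith
        thus ?thesis unfolding p1 using u by (simp add: powr_neg_one)
      qed
      have "ln (s - \<delta>) < ln (1 + (s - \<delta>))" using s by simp
      thus "0 \<le> ln (1 + (s - \<delta>)) - ln (s - \<delta>)" by simp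
    next
      fix B :: real
      show "\<exists>\<eta>>0. \<forall>s. \<delta> < s \<and> s < \<delta> + \<eta> \<longrightarrow> B < ln (1 + (s - \<delta>)) - ln (s - \<delta>)"
      proof (intro exI[of _ "exp (- B)"] conjI allI impI)
        fix s assume s: "\<delta> < s \<and> s < \<delta> + exp (- B)"
        have "ln (s - \<delta>) < ln (exp (-B))" using s by (subst ln_less_cancel_iff) auto
        hence "ln (s - \<delta>) < - B" by simp
        moreover have "ln (1 + (s - \<delta>)) \<ge> 0" using s by simp
        ultimately show "B < ln (1 + (s - \<delta>)) - ln (s - \<delta>)" by simp
      qed simp
    qed simp
  next
    case False
    hence ag: "\<alpha> > 2 * \<gamma>" using alpha by simp
    define \<beta> where "\<beta> = \<alpha> / (2 * \<gamma>) - 1"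
    have bpos: "\<beta> > 0" using ag gpos by (simp add: \<beta>_def field_simps)
    show ?thesis
    proof (rule L.nocoll[where f = "\<lambda>s. (s - \<delta>) powr (- \<beta>)"
          and f' = "\<lambda>s. - \<beta> * (s - \<delta>) powr (- \<beta> - 1)" and \<kappa> = \<beta>, OF _ _ _ _ _ init t])
      fix s assume s: "s > \<delta>"
      show "((\<lambda>s. (s - \<delta>) powr (- \<beta>)) has_real_derivative - \<beta> * (s - \<delta>) powr (- \<beta> - 1)) (at s)"
        using s by (auto intro!: derivative_eq_intros)
      show "\<bar>- \<beta> * (s - \<delta>) powr (- \<beta> - 1)\<bar> \<le> \<beta> * (s - \<delta>) powr - (\<alpha> / (2 * \<gamma>))"
        using bpos by (simp add: \<beta>_def abs_mult)
      show "0 \<le> (s - \<delta>) powr (- \<beta>)" by simp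
    next
      fix B :: real
      define \<eta> where "\<eta> = (max B 0 + 1) powr (- 1 / \<beta>)"
      show "\<exists>\<eta>>0. \<forall>s. \<delta> < s \<and> s < \<delta> + \<eta> \<longrightarrow> B < (s - \<delta>) powr (- \<beta>)"
      proof (intro exI[of _ \<eta>] conjI allI impI)
        show "\<eta> > 0" by (simp add: \<eta>_def)
        fix s assume s: "\<delta> < s \<and> s < \<delta> + \<eta>"
        have "\<eta> powr (- \<beta>) < (s - \<delta>) powr (- \<beta>)"
          using s bpos by (intro powr_less_mono2_neg) auto
        moreover have "\<eta> powr (- \<beta>) = max B 0 + 1"
          unfolding \<eta>_def using bpos by (simp add: powr_powr)
        ultimately show "B < (s - \<delta>) powr (- \<beta>)" by simp
      qed
    qed (use bpos in simp)
  qed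
  have ls: "life_span N \<delta> x = \<infinity>"
    unfolding life_span_def
  proof (rule ereal_top)
    fix B :: real
    define m where "m = max B 0"
    have m: "m \<ge> 0" "B \<le> m" by (auto simp: m_def)
    have "ereal m \<in> {ereal s | s. s \<ge> 0 \<and> (\<forall>\<tau>. 0 \<le> \<tau> \<and> \<tau> < s \<longrightarrow> collisionless N \<delta> x \<tau>)}"
      by (rule CollectI, rule exI[of _ m]) (use allcol m in auto)
    hence "ereal m \<le> Sup {ereal s | s. s \<ge> 0 \<and> (\<forall>\<tau>. 0 \<le> \<tau> \<and> \<tau> < s \<longrightarrow> collisionless N \<delta> x \<tau>)}"
      by (rule Sup_upper)
    thus "ereal B \<le> Sup {ereal s | s. s \<ge> 0 \<and> (\<forall>\<tau>. 0 \<le> \<tau> \<and> \<tau> < s \<longrightarrow> collisionless N \<delta> x \<tau>)}"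
      by (rule order_trans[rotated]) (use m in simp)
  qed
  have ineq: "(\<alpha> = 2 * \<gamma> \<longrightarrow>
         L0 N \<delta> x t + 1 / (2 * C\<^sub>1 * \<gamma> * (real N - 1)) * (\<Sum>i\<in>{1..N}. (norm (v i t))\<^sup>2)
         \<le> (2 * \<gamma> - 1) / (2 * \<gamma>) * t + L0 N \<delta> x 0
           + 1 / (2 * C\<^sub>1 * \<gamma> * (real N - 1)) * (\<Sum>i\<in>{1..N}. (norm (v i 0))\<^sup>2)) \<and>
      (\<alpha> > 2 * \<gamma> \<longrightarrow>
         (let \<beta> = \<alpha> / (2 * \<gamma>) - 1 in
         Lbeta N \<delta> \<beta> x t + \<beta> / (2 * C\<^sub>1 * \<gamma> * (real N - 1)) * (\<Sum>i\<in>{1..N}. (norm (v i t))\<^sup>2)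
         \<le> (2 * \<gamma> - 1) * \<beta> / (2 * \<gamma>) * t + Lbeta N \<delta> \<beta> x 0
           + \<beta> / (2 * C\<^sub>1 * \<gamma> * (real N - 1)) * (\<Sum>i\<in>{1..N}. (norm (v i 0))\<^sup>2)))"
    if t: "t \<ge> 0" for t
  proof (intro conjI impI)
    assume a: "\<alpha> = 2 * \<gamma>"
    have p1: "\<alpha> / (2 * \<gamma>) = 1" using a gpos by simp
    have colt: "\<And>\<tau>. 0 \<le> \<tau> \<Longrightarrow> \<tau> \<le> t \<Longrightarrow> collisionless N \<delta> x \<tau>" using allcol by blast
    have fd1: "((\<lambda>s. ln (s - \<delta>)) has_real_derivative 1 / (s - \<delta>)) (at s)" if s: "s > \<delta>" for s
      using s by (auto intro!: derivative_eq_intros)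
    have fb1: "\<bar>1 / (s - \<delta>)\<bar> \<le> 1 * (s - \<delta>) powr - (\<alpha> / (2 * \<gamma>))" if s: "s > \<delta>" for s
      using s unfolding p1 by (simp add: powr_neg_one)
    note lw = L.lyap[OF fd1 fb1 zero_le_one t colt]
    have "L.Phi (\<lambda>s. ln (s - \<delta>)) t + 1 / (2 * C\<^sub>1 * \<gamma> * (real N - 1)) * L.En t
     \<le> 1 * (2 * \<gamma> - 1) / (2 * \<gamma>) * t + L.Phi (\<lambda>s. ln (s - \<delta>)) 0 + 1 / (2 * C\<^sub>1 * \<gamma> * (real N - 1)) * L.En 0"
      by (rule lw)
    thus "L0 N \<delta> x t + 1 / (2 * C\<^sub>1 * \<gamma> * (real N - 1)) * (\<Sum>i\<in>{1..N}. (norm (v i t))\<^sup>2)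
         \<le> (2 * \<gamma> - 1) / (2 * \<gamma>) * t + L0 N \<delta> x 0
           + 1 / (2 * C\<^sub>1 * \<gamma> * (real N - 1)) * (\<Sum>i\<in>{1..N}. (norm (v i 0))\<^sup>2)"
      by (simp add: L0_def L.Phi_def L.En_def)
  next
    assume ag: "\<alpha> > 2 * \<gamma>"
    define \<beta> where "\<beta> = \<alpha> / (2 * \<gamma>) - 1"
    have bpos: "\<beta> > 0" using ag gpos by (simp add: \<beta>_def field_simps)
    have colt: "\<And>\<tau>. 0 \<le> \<tau> \<Longrightarrow> \<tau> \<le> t \<Longrightarrow> collisionless N \<delta> x \<tau>" using allcol by blast
    have fd2: "((\<lambda>s. (s - \<delta>) powr (- \<beta>)) has_real_derivative - \<beta> * (s - \<delta>) powr (- \<beta> - 1)) (at s)" if s: "s > \<delta>" for s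
      using s by (auto intro!: derivative_eq_intros)
    have fb2: "\<bar>- \<beta> * (s - \<delta>) powr (- \<beta> - 1)\<bar> \<le> \<beta> * (s - \<delta>) powr - (\<alpha> / (2 * \<gamma>))" if s: "s > \<delta>" for s
      using bpos by (simp add: \<beta>_def abs_mult)
    have b0: "\<beta> \<ge> 0" using bpos by simp
    note lw = L.lyap[OF fd2 fb2 b0 t colt]
    have "L.Phi (\<lambda>s. (s - \<delta>) powr (- \<beta>)) t + \<beta> / (2 * C\<^sub>1 * \<gamma> * (real N - 1)) * L.En t
     \<le> \<beta> * (2 * \<gamma> - 1) / (2 * \<gamma>) * t + L.Phi (\<lambda>s. (s - \<delta>) powr (- \<beta>)) 0 + \<beta> / (2 * C\<^sub>1 * \<gamma> * (real N - 1)) * L.En 0"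
      by (rule lw)
    thus "let \<beta> = \<alpha> / (2 * \<gamma>) - 1 in
         Lbeta N \<delta> \<beta> x t + \<beta> / (2 * C\<^sub>1 * \<gamma> * (real N - 1)) * (\<Sum>i\<in>{1..N}. (norm (v i t))\<^sup>2)
         \<le> (2 * \<gamma> - 1) * \<beta> / (2 * \<gamma>) * t + Lbeta N \<delta> \<beta> x 0
           + \<beta> / (2 * C\<^sub>1 * \<gamma> * (real N - 1)) * (\<Sum>i\<in>{1..N}. (norm (v i 0))\<^sup>2)"
      unfolding Let_def \<beta>_def[symmetric]
      by (simp add: Lbeta_def L.Phi_def L.En_def mult.commute mult.left_commute)
  qed
  show ?thesis
  proof (rule conjI[OF ls], intro allI impI)
    fix t assume a: "0 \<le> t \<and> ereal t < life_span N \<delta> x"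
    from a have t: "t \<ge> 0" by (rule conjunct1)
    show "(\<alpha> = 2 * \<gamma> \<longrightarrow>
         L0 N \<delta> x t + 1 / (2 * C\<^sub>1 * \<gamma> * (real N - 1)) * (\<Sum>i\<in>{1..N}. (norm (v i t))\<^sup>2)
         \<le> (2 * \<gamma> - 1) / (2 * \<gamma>) * t + L0 N \<delta> x 0
           + 1 / (2 * C\<^sub>1 * \<gamma> * (real N - 1)) * (\<Sum>i\<in>{1..N}. (norm (v i 0))\<^sup>2)) \<and>
      (\<alpha> > 2 * \<gamma> \<longrightarrow>
         (let \<beta> = \<alpha> / (2 * \<gamma>) - 1 in
         Lbeta N \<delta> \<beta> x t + \<beta> / (2 * C\<^sub>1 * \<gamma> * (real N - 1)) * (\<Sum>i\<in>{1..N}. (norm (v i t))\<^sup>2)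
         \<le> (2 * \<gamma> - 1) * \<beta> / (2 * \<gamma>) * t + Lbeta N \<delta> \<beta> x 0
           + \<beta> / (2 * C\<^sub>1 * \<gamma> * (real N - 1)) * (\<Sum>i\<in>{1..N}. (norm (v i 0))\<^sup>2)))"
      by (rule ineq[OF t])
  qed
qed

end
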